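(* The at-the-point product of two cobweb tiling sequences need not be a cobweb tiling sequence. Specifically, let $A=(n_A)_{n\ge0}$ with $0_A=1$, $n_A=2$ for even $n\ge2$ and $n_A=1$ for odd $n$; and let $B=(n_B)_{n\ge0}$ with $0_B=1$, $n_B=3$ for $n\ge1$ with $3\mid n$ and $n_B=1$ otherwise. Then $A$ and $B$ are cobweb tiling sequences, while $A\cdot B$ (defined by $n_{A\cdot B}=n_A n_B$) is not a cobweb tiling sequence.
   Context: Notation: $n_F\equiv F_n$. A sequence $F=(n_F)_{n\ge0}$ of natural numbers with $0_F=1$ is cobweb-admissible iff every $F$-nomial coefficient $\binom{n}{k}_F=\frac{n_F(n-1)_F\cdots(n-k+1)_F}{1_F2_F\cdots k_F}$, $0\le k\le n$, is a nonnegative integer. The cobweb poset of $F$ has, for each $s\ge1$, a level $\Phi_s$ consisting of $s_F$ distinct vertices (levels pairwise disjoint), plus a root level $\Phi_0$ with one vertex; for $x\in\Phi_i$, $y\in\Phi_j$ one has $x<y$ iff $i<j$. For $1\le a\le b$, the layer $\langle\Phi_a\to\Phi_b\rangle$ is the subposet on $\Phi_a\cup\dots\cup\Phi_b$; it has $m=b-a+1$ levels and its maximal chains form the set $\Phi_a\times\dots\times\Phi_b$. For a permutation $\sigma$ of $\{1,\dots,m\}$, a block of type $\sigma P_m$ in this layer is the subposet induced on $V_a\cup\dots\cup V_b$ where $V_{a-1+i}\subseteq\Phi_{a-1+i}$ and $|V_{a-1+i}|=\sigma(i)_F$ for $i=1,\dots,m$; its maximal chains form the set $V_a\times\dots\times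 V_b$. A tiling of the layer is a finite family of such blocks ($\sigma$ may vary from block to block) whose sets $V_a\times\dots\times V_b$ partition $\Phi_a\times\dots\times\Phi_b$ (pairwise max-disjoint and covering all maximal chains). A cobweb tiling sequence is a cobweb-admissible sequence $F$ such that for all $1\le a\le b$ the layer $\langle\Phi_a\to\Phi_b\rangle$ admits a tiling by blocks of type $\sigma P_{b-a+1}$. *)

theory Defs
  imports "HOL-Library.FuncSet" "HOL-Combinatorics.Permutations"
begin

text \<open>A sequence F is represented as a function nat to nat, with F n the value n_F.\<close>

text \<open>Cobweb-admissibility: F 0 = 1 and every F-nomial coefficient
  (F n * ... * F (n-k+1)) / (F 1 * ... * F k), 0 <= k <= n, is a well-defined
  (nonzero denominator) nonnegative integer.\<close>
definition cobweb_admissible :: "(nat \<Rightarrow> nat) \<Rightarrow> bool" where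
  "cobweb_admissible F \<longleftrightarrow> F 0 = 1 \<and>
     (\<forall>n k. k \<le> n \<longrightarrow>
        (\<Prod>i\<in>{1..k}. F i) \<noteq> 0 \<and>
        (\<Prod>i\<in>{1..k}. F i) dvd (\<Prod>i\<in>{1..k}. F (n - k + i)))"

text \<open>Level s of the cobweb poset: vertices (s, j) with j < F s; we identify
  the vertex with its index j. A maximal chain of the layer from level a to level b
  is an (extensional) function assigning to each level i in {a..b} a vertex index.\<close>
definition layer_chains :: "(nat \<Rightarrow> nat) \<Rightarrow> nat \<Rightarrow> nat \<Rightarrow> (nat \<Rightarrow> nat) set" where
  "layer_chains F a b = (\<Pi>\<^sub>E i\<in>{a..b}. {..<F i})"

definition is_block :: "(nat \<Rightarrow> nat) \<Rightarrow> nat \<Rightarrow> nat \<Rightarrow> (nat \<Rightarrow> nat) \<Rightarrow> (nat \<Rightarrow> nat set) \<Rightarrow> bool" where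
  "is_block F a b \<sigma> V \<longleftrightarrow> \<sigma> permutes {1..b - a + 1} \<and>
     (\<forall>i\<in>{1..b - a + 1}. V (a - 1 + i) \<subseteq> {..<F (a - 1 + i)} \<and>
                          card (V (a - 1 + i)) = F (\<sigma> i))"

definition block_chains :: "nat \<Rightarrow> nat \<Rightarrow> (nat \<Rightarrow> nat set) \<Rightarrow> (nat \<Rightarrow> nat) set" where
  "block_chains a b V = (\<Pi>\<^sub>E i\<in>{a..b}. V i)"

definition is_tiling :: "(nat \<Rightarrow> nat) \<Rightarrow> nat \<Rightarrow> nat \<Rightarrow> (nat \<Rightarrow> nat set) set \<Rightarrow> bool" where
  "is_tiling F a b T \<longleftrightarrow> finite T \<and>
     (\<forall>V\<in>T. \<exists>\<sigma>. is_block F a b \<sigma> V) \<and>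
     (\<forall>V\<in>T. \<forall>W\<in>T. V \<noteq> W \<longrightarrow> block_chains a b V \<inter> block_chains a b W = {}) \<and>
     (\<Union>V\<in>T. block_chains a b V) = layer_chains F a b"

definition cobweb_tiling_seq :: "(nat \<Rightarrow> nat) \<Rightarrow> bool" where
  "cobweb_tiling_seq F \<longleftrightarrow> cobweb_admissible F \<and>
     (\<forall>a b. 1 \<le> a \<and> a \<le> b \<longrightarrow> (\<exists>T. is_tiling F a b T))"

definition seqA :: "nat \<Rightarrow> nat" where
  "seqA n = (if n = 0 then 1 else if even n then 2 else 1)"

definition seqB :: "nat \<Rightarrow> nat" where
  "seqB n = (if n = 0 then 1 else if 3 dvd n then 3 else 1)"

end

theory Submission
  imports Defs
begin

definition seqP :: "nat \<Rightarrow> nat \<Rightarrow> nat" where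
  "seqP p n = (if n = 0 then 1 else if p dvd n then p else 1)"

lemma seqA_eq: "seqA = seqP 2"
  by (auto simp: fun_eq_iff seqA_def seqP_def)

lemma seqB_eq: "seqB = seqP 3"
  by (auto simp: fun_eq_iff seqB_def seqP_def)

lemma card_mult_le:
  assumes p: "(p::nat) > 0"
  shows "card {i\<in>{1..k}. p dvd i} \<le> card {i\<in>{1..k}. p dvd (s+i)}"
proof -
  let ?r = "s mod p"
  have r: "?r < p" using p by simp
  have ge: "i \<ge> p" if "i \<in> {i\<in>{1..k}. p dvd i}" for i
    using that by (auto intro: dvd_imp_le)
  have "inj_on (\<lambda>i. i - ?r) {i\<in>{1..k}. p dvd i}"
  proof (rule inj_onI)
    fix i j assume "i \<in> {i\<in>{1..k}. p dvd i}" "j \<in> {i\<in>{1..k}. p dvd i}" "i - ?r = j - ?r"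
    with ge[of i] ge[of j] r show "i = j" by linarith
  qed
  moreover have "(\<lambda>i. i - ?r) ` {i\<in>{1..k}. p dvd i} \<subseteq> {i\<in>{1..k}. p dvd (s+i)}"
  proof
    fix x assume "x \<in> (\<lambda>i. i - ?r) ` {i\<in>{1..k}. p dvd i}"
    then obtain i where i: "i \<in> {i\<in>{1..k}. p dvd i}" and x: "x = i - ?r" by auto
    have "i \<ge> p" using ge[OF i] .
    have d1: "p dvd (s - ?r)" by (simp add: minus_mod_eq_mult_div)
    have eq: "s + x = (s - ?r) + i" using \<open>i \<ge> p\<close> r x by (simp add: mod_le_divisor)
    have "p dvd ((s - ?r) + i)" using d1 i by (intro dvd_add) auto
    hence "p dvd (s + x)" by (simp only: eq)
    moreover have "x \<in> {1..k}" using i x \<open>i \<ge> p\<close> r by auto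
    ultimately show "x \<in> {i\<in>{1..k}. p dvd (s+i)}" by simp
  qed
  ultimately show ?thesis by (rule card_inj_on_le) simp
qed

lemma prod_seqP:
  assumes "(p::nat) > 0"
  shows "(\<Prod>i\<in>{1..k}. seqP p (s+i)) = p ^ card {i\<in>{1..k}. p dvd (s+i)}"
proof -
  have "(\<Prod>i\<in>{1..k}. seqP p (s+i)) = (\<Prod>i\<in>{1..k}. if p dvd (s+i) then p else 1)"
    by (rule prod.cong) (auto simp: seqP_def)
  also have "\<dots> = (\<Prod>i\<in>{i\<in>{1..k}. p dvd (s+i)}. p)"
    by (rule prod.inter_filter[symmetric]) simp
  also have "\<dots> = p ^ card {i\<in>{1..k}. p dvd (s+i)}" by simp
  finally show ?thesis .
qed

lemma admissible_seqP:
  assumes p: "(p::nat) > 0"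
  shows "cobweb_admissible (seqP p)"
  unfolding cobweb_admissible_def
proof (intro conjI allI impI)
  show "seqP p 0 = 1" by (simp add: seqP_def)
  fix n k :: nat assume "k \<le> n"
  have e0: "(\<Prod>i\<in>{1..k}. seqP p i) = p ^ card {i\<in>{1..k}. p dvd i}"
    using prod_seqP[OF p, where s=0 and k=k] by (simp only: add_0_left)
  show "(\<Prod>i\<in>{1..k}. seqP p i) \<noteq> 0" using e0 p by simp
  have e1: "(\<Prod>i\<in>{1..k}. seqP p (n - k + i)) = p ^ card {i\<in>{1..k}. p dvd (n - k + i)}"
    using prod_seqP[OF p] .
  show "(\<Prod>i\<in>{1..k}. seqP p i) dvd (\<Prod>i\<in>{1..k}. seqP p (n - k + i))"
    unfolding e0 e1 by (rule le_imp_power_dvd) (rule card_mult_le[OF p])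
qed

lemma exists_perm:
  assumes "finite U" "X \<subseteq> U" "Y \<subseteq> U" "card X \<le> card Y"
  shows "\<exists>\<sigma>. \<sigma> permutes U \<and> (\<forall>i\<in>U. \<sigma> i \<in> X \<longrightarrow> i \<in> Y)"
proof -
  have fX: "finite X" and fY: "finite Y" using assms finite_subset by auto
  obtain Y' where Y': "Y' \<subseteq> Y" "card Y' = card X" "finite Y'"
    using obtain_subset_with_card_n[OF assms(4)] by metis
  obtain g where g: "bij_betw g Y' X" using finite_same_card_bij[OF Y'(3) fX Y'(2)] by blast
  have "card (U - Y') = card (U - X)"
    using Y' assms fX by (simp add: card_Diff_subset subset_trans)
  then obtain h where h: "bij_betw h (U - Y') (U - X)"
    using finite_same_card_bij assms(1) by blast
  have h': "bij_betw (\<lambda>i. if i \<in> U then h i else i) (U - Y') (U - X)"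
    using h by (rule bij_betw_cong[THEN iffD1, rotated]) auto
  define \<sigma> where "\<sigma> = (\<lambda>x. if x \<in> Y' then g x else (\<lambda>i. if i \<in> U then h i else i) x)"
  have "bij_betw \<sigma> (Y' \<union> (U - Y')) (X \<union> (U - X))"
    unfolding \<sigma>_def by (rule bij_betw_disjoint_Un[OF g h']) auto
  moreover have "Y' \<union> (U - Y') = U" "X \<union> (U - X) = U" using Y' assms by auto
  ultimately have b: "bij_betw \<sigma> U U" by simp
  have "\<sigma> permutes U"
    by (rule bij_imp_permutes[OF b]) (use Y' assms in \<open>auto simp: \<sigma>_def\<close>)
  moreover have "\<forall>i\<in>U. \<sigma> i \<in> X \<longrightarrow> i \<in> Y"
  proof (intro ballI impI)
    fix i assume i: "i \<in> U" "\<sigma> i \<in> X"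
    show "i \<in> Y"
    proof (cases "i \<in> Y'")
      case True then show ?thesis using Y' by auto
    next
      case False
      then have "\<sigma> i = h i" using i by (simp add: \<sigma>_def)
      moreover have "h i \<in> U - X" using h i False bij_betwE by blast
      ultimately show ?thesis using i by simp
    qed
  qed
  ultimately show ?thesis by blast
qed

lemma tiling_from_perm:
  assumes perm: "\<sigma> permutes {1..b - a + 1}" and ab: "1 \<le> a" "a \<le> b"
    and hd: "\<forall>i\<in>{1..b - a + 1}. 0 < F (\<sigma> i) \<and> F (\<sigma> i) dvd F (a - 1 + i)"
  shows "\<exists>T. is_tiling F a b T"
proof -
  define d where "d j = F (\<sigma> (j + 1 - a))" for j
  have dj: "0 < d j \<and> d j dvd F j" if "j \<in> {a..b}" for j
  proof -
    have "j + 1 - a \<in> {1..b - a + 1}" "a - 1 + (j + 1 - a) = j" using that ab by auto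
    thus ?thesis using hd[rule_format, of "j + 1 - a"] by (simp add: d_def)
  qed
  define Vf where "Vf c = (\<lambda>j. {c j * d j ..< c j * d j + d j})" for c :: "nat \<Rightarrow> nat"
  define C where "C = (\<Pi>\<^sub>E j\<in>{a..b}. {..< F j div d j})"
  have mem: "x \<in> Vf c j \<longleftrightarrow> x div d j = c j" if "0 < d j" for x c j
  proof
    assume "x \<in> Vf c j"
    then show "x div d j = c j" by (intro div_nat_eqI) (auto simp: Vf_def algebra_simps)
  next
    assume h: "x div d j = c j"
    have "x = x div d j * d j + x mod d j" by simp
    moreover have "x mod d j < d j" using that by simp
    ultimately show "x \<in> Vf c j" unfolding Vf_def using h
      by (metis atLeastLessThan_iff le_add1 nat_add_left_cancel_less)
  qed
  have sub: "Vf c j \<subseteq> {..<F j}" if "c \<in> C" "j \<in> {a..b}" for c j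
  proof
    fix x assume x: "x \<in> Vf c j"
    have "c j < F j div d j" using that by (auto simp: C_def)
    hence "(c j + 1) * d j \<le> (F j div d j) * d j" by (intro mult_le_mono1) simp
    also have "\<dots> = F j" using dj[OF that(2)] by simp
    finally show "x \<in> {..<F j}" using x by (auto simp: Vf_def)
  qed
  define T where "T = Vf ` C"
  have bc: "f \<in> block_chains a b (Vf c) \<longleftrightarrow> f \<in> extensional {a..b} \<and> (\<forall>j\<in>{a..b}. f j div d j = c j)" for f c
    using mem dj by (auto simp: block_chains_def PiE_iff)
  show ?thesis
  proof (rule exI[of _ T], unfold is_tiling_def, intro conjI)
    show "finite T" unfolding T_def C_def by (auto intro!: finite_PiE)
    show "\<forall>V\<in>T. \<exists>\<sigma>. is_block F a b \<sigma> V"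
    proof
      fix V assume "V \<in> T"
      then obtain c where c: "c \<in> C" and V: "V = Vf c" by (auto simp: T_def)
      have "is_block F a b \<sigma> V" unfolding is_block_def
      proof (intro conjI perm ballI)
        fix i assume i: "i \<in> {1..b - a + 1}"
        hence j: "a - 1 + i \<in> {a..b}" and jj: "a - 1 + i + 1 - a = i" using ab by auto
        show "V (a - 1 + i) \<subseteq> {..<F (a - 1 + i)}" using sub[OF c j] V by simp
        show "card (V (a - 1 + i)) = F (\<sigma> i)" using V jj by (simp add: Vf_def d_def)
      qed
      thus "\<exists>\<sigma>. is_block F a b \<sigma> V" by blast
    qed
    show "\<forall>V\<in>T. \<forall>W\<in>T. V \<noteq> W \<longrightarrow> block_chains a b V \<inter> block_chains a b W = {}"
    proof (intro ballI impI)
      fix V W assume "V \<in> T" "W \<in> T" "V \<noteq> W"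
      then obtain c c' where c: "c \<in> C" "V = Vf c" and c': "c' \<in> C" "W = Vf c'"
        by (auto simp: T_def)
      show "block_chains a b V \<inter> block_chains a b W = {}"
      proof (rule ccontr)
        assume "block_chains a b V \<inter> block_chains a b W \<noteq> {}"
        then obtain f where "f \<in> block_chains a b (Vf c)" "f \<in> block_chains a b (Vf c')"
          using c c' by auto
        hence "\<forall>j\<in>{a..b}. c j = c' j" using bc by auto
        moreover have "c \<in> extensional {a..b}" "c' \<in> extensional {a..b}"
          using c c' by (auto simp: C_def PiE_iff)
        ultimately have "c = c'" by (metis extensionalityI)
        thus False using c c' \<open>V \<noteq> W\<close> by simp
      qed
    qed
    show "(\<Union>V\<in>T. block_chains a b V) = layer_chains F a b"
    proof
      show "(\<Union>V\<in>T. block_chains a b V) \<subseteq> layer_chains F a b"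
      proof
        fix f assume "f \<in> (\<Union>V\<in>T. block_chains a b V)"
        then obtain c where c: "c \<in> C" and f: "f \<in> block_chains a b (Vf c)"
          by (auto simp: T_def)
        show "f \<in> layer_chains F a b"
          using f sub[OF c] unfolding block_chains_def layer_chains_def PiE_iff by blast
      qed
    next
      show "layer_chains F a b \<subseteq> (\<Union>V\<in>T. block_chains a b V)"
      proof
        fix f assume f: "f \<in> layer_chains F a b"
        define c where "c = restrict (\<lambda>j. f j div d j) {a..b}"
        have "c \<in> C"
        proof -
          have "f j div d j < F j div d j" if "j \<in> {a..b}" for j
          proof (rule less_mult_imp_div_less)
            have "f j < F j" using f that by (auto simp: layer_chains_def PiE_iff)
            also have "F j = F j div d j * d j" using dj[OF that] by simp
            finally show "f j < F j div d j * d j" .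
          qed
          thus ?thesis by (auto simp: C_def c_def)
        qed
        moreover have "f \<in> block_chains a b (Vf c)"
          using f bc by (auto simp: c_def layer_chains_def PiE_iff)
        ultimately show "f \<in> (\<Union>V\<in>T. block_chains a b V)" by (auto simp: T_def)
      qed
    qed
  qed
qed

lemma tiling_seqP:
  assumes p: "(p::nat) > 0"
  shows "cobweb_tiling_seq (seqP p)"
  unfolding cobweb_tiling_seq_def
proof (intro conjI allI impI admissible_seqP[OF p])
  fix a b :: nat assume ab: "1 \<le> a \<and> a \<le> b"
  let ?U = "{1..b - a + 1}"
  have "card {i\<in>?U. p dvd i} \<le> card {i\<in>?U. p dvd (a - 1 + i)}"
    by (rule card_mult_le[OF p])
  then have "\<exists>\<sigma>. \<sigma> permutes ?U \<and> (\<forall>i\<in>?U. \<sigma> i \<in> {i\<in>?U. p dvd i} \<longrightarrow> i \<in> {i\<in>?U. p dvd (a - 1 + i)})"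
    by (intro exists_perm) auto
  then obtain \<sigma> where s: "\<sigma> permutes ?U" and sX: "\<forall>i\<in>?U. \<sigma> i \<in> {i\<in>?U. p dvd i} \<longrightarrow> i \<in> {i\<in>?U. p dvd (a - 1 + i)}"
    by blast
  have "\<forall>i\<in>?U. 0 < seqP p (\<sigma> i) \<and> seqP p (\<sigma> i) dvd seqP p (a - 1 + i)"
  proof
    fix i assume i: "i \<in> ?U"
    have si: "\<sigma> i \<in> ?U" using permutes_in_image[OF s] i by simp
    show "0 < seqP p (\<sigma> i) \<and> seqP p (\<sigma> i) dvd seqP p (a - 1 + i)"
    proof (cases "p dvd \<sigma> i")
      case True
      hence "p dvd (a - 1 + i)" using sX i si by auto
      thus ?thesis using True si i p ab by (auto simp: seqP_def)
    next
      case False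
      thus ?thesis using si by (auto simp: seqP_def)
    qed
  qed
  thus "\<exists>T. is_tiling (seqP p) a b T"
    using tiling_from_perm[OF s] ab by auto
qed

lemma not_tiling_prod: "\<not> cobweb_tiling_seq (\<lambda>n. seqA n * seqB n)"
proof
  let ?C = "\<lambda>n. seqA n * seqB n"
  assume "cobweb_tiling_seq ?C"
  then obtain T where T: "is_tiling ?C 5 7 T" unfolding cobweb_tiling_seq_def by fastforce
  have "restrict (\<lambda>_. 0) {5..7} \<in> layer_chains ?C 5 7"
    by (auto simp: layer_chains_def seqA_def seqB_def)
  then obtain V where "V \<in> T" using T unfolding is_tiling_def by blast
  then obtain \<sigma> where bl: "is_block ?C 5 7 \<sigma> V" using T unfolding is_tiling_def by blast
  have s: "\<sigma> permutes {1..3}" using bl by (simp add: is_block_def)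
  have H: "\<forall>i\<in>{1..3::nat}. V (4 + i) \<subseteq> {..<?C (4 + i)} \<and> card (V (4 + i)) = ?C (\<sigma> i)"
    using bl by (simp add: is_block_def)
  have c1: "card (V 5) = ?C (\<sigma> 1)" "V 5 \<subseteq> {..<?C 5}"
    using H[rule_format, of 1] by simp_all
  have c3: "card (V 7) = ?C (\<sigma> 3)" "V 7 \<subseteq> {..<?C 7}"
    using H[rule_format, of 3] by simp_all
  have e: "?C 5 = 1" "?C 7 = 1" by (auto simp: seqA_def seqB_def)
  have "card (V 5) \<le> card {..<1::nat}" using c1(2) e(1) by (intro card_mono) auto
  moreover have "card (V 7) \<le> card {..<1::nat}" using c3(2) e(2) by (intro card_mono) auto
  ultimately
  have "card (V 5) \<le> 1" "card (V 7) \<le> 1" by simp_all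
  hence le: "?C (\<sigma> 1) \<le> 1" "?C (\<sigma> 3) \<le> 1" using c1 c3 by auto
  have r1: "\<sigma> 1 \<in> {1..3}" and r3: "\<sigma> 3 \<in> {1..3}" using permutes_in_image[OF s] by auto
  have "\<sigma> 1 = 1 \<or> \<sigma> 1 = 2 \<or> \<sigma> 1 = 3" using r1 by auto
  hence "\<sigma> 1 = 1" using le(1) by (auto simp: seqA_def seqB_def)
  moreover have "\<sigma> 3 = 1 \<or> \<sigma> 3 = 2 \<or> \<sigma> 3 = 3" using r3 by auto
  hence "\<sigma> 3 = 1" using le(2) by (auto simp: seqA_def seqB_def)
  ultimately have "\<sigma> 1 = \<sigma> 3" by simp
  hence "(1::nat) = 3" using permutes_inj[OF s] by (meson injD)
  thus False by simp
qed

theorem mainTheorem4: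
  shows "cobweb_tiling_seq seqA \<and> cobweb_tiling_seq seqB \<and>
         \<not> cobweb_tiling_seq (\<lambda>n. seqA n * seqB n)"
  using tiling_seqP[of 2] tiling_seqP[of 3] not_tiling_prod seqA_eq seqB_eq by simp

end
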